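(* Let $F\colon\mathbf{A}\to\mathbf{C}$ be a discrete opfibration and $J\colon\mathbf{A}\to\mathbf{B}$ a cosieve between small categories, and let $\bar F\colon\mathbf{B}\to\mathbf{D}$, $\bar J\colon\mathbf{C}\to\mathbf{D}$ be a pushout of $J$ and $F$ in $\mathbf{Cat}$ (so $\bar F\circ J=\bar J\circ F$). Then $\bar F$ is a discrete opfibration.
   Context: $\mathbf{Cat}$ is the category of small categories and functors. A functor $F\colon\mathbf{A}\to\mathbf{B}$ is a discrete opfibration if for each object $A$ of $\mathbf{A}$ and each morphism $b$ of $\mathbf{B}$ with domain $FA$ there is a unique morphism $a$ of $\mathbf{A}$ with domain $A$ and $Fa=b$. A cosieve is an injective-on-objects discrete opfibration. *)

theory Defs
  imports Main
begin

text \<open>A small category: a set of objects, a set of morphisms, domain, codomain,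
  identities and composition (Comp C g f is g after f, meaningful when Cod f = Dom g).
  Smallness is automatic: objects and morphisms form sets.\<close>

record ('o, 'm) cat =
  Obj  :: "'o set"
  Arr  :: "'m set"
  Dom  :: "'m \<Rightarrow> 'o"
  Cod  :: "'m \<Rightarrow> 'o"
  Id   :: "'o \<Rightarrow> 'm"
  Comp :: "'m \<Rightarrow> 'm \<Rightarrow> 'm"

definition category :: "('o, 'm) cat \<Rightarrow> bool" where
  "category C \<longleftrightarrow>
     (\<forall>f\<in>Arr C. Dom C f \<in> Obj C \<and> Cod C f \<in> Obj C) \<and>
     (\<forall>x\<in>Obj C. Id C x \<in> Arr C \<and> Dom C (Id C x) = x \<and> Cod C (Id C x) = x) \<and>
     (\<forall>f\<in>Arr C. \<forall>g\<in>Arr C. Cod C f = Dom C g \<longrightarrow>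
        Comp C g f \<in> Arr C \<and> Dom C (Comp C g f) = Dom C f \<and> Cod C (Comp C g f) = Cod C g) \<and>
     (\<forall>f\<in>Arr C. Comp C f (Id C (Dom C f)) = f \<and> Comp C (Id C (Cod C f)) f = f) \<and>
     (\<forall>f\<in>Arr C. \<forall>g\<in>Arr C. \<forall>h\<in>Arr C. Cod C f = Dom C g \<longrightarrow> Cod C g = Dom C h \<longrightarrow>
        Comp C h (Comp C g f) = Comp C (Comp C h g) f)"

text \<open>A functor is a pair (object map, morphism map); only its values on the
  carriers matter.\<close>

type_synonym ('o1, 'm1, 'o2, 'm2) cfunctor = "('o1 \<Rightarrow> 'o2) \<times> ('m1 \<Rightarrow> 'm2)"

definition is_functor ::
  "('o1, 'm1) cat \<Rightarrow> ('o2, 'm2) cat \<Rightarrow> ('o1, 'm1, 'o2, 'm2) cfunctor \<Rightarrow> bool" where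
  "is_functor C D F \<longleftrightarrow> category C \<and> category D \<and>
     (\<forall>x\<in>Obj C. fst F x \<in> Obj D) \<and>
     (\<forall>f\<in>Arr C. snd F f \<in> Arr D \<and> Dom D (snd F f) = fst F (Dom C f)
                                 \<and> Cod D (snd F f) = fst F (Cod C f)) \<and>
     (\<forall>x\<in>Obj C. snd F (Id C x) = Id D (fst F x)) \<and>
     (\<forall>f\<in>Arr C. \<forall>g\<in>Arr C. Cod C f = Dom C g \<longrightarrow>
        snd F (Comp C g f) = Comp D (snd F g) (snd F f))"

definition discrete_opfibration ::
  "('o1, 'm1) cat \<Rightarrow> ('o2, 'm2) cat \<Rightarrow> ('o1, 'm1, 'o2, 'm2) cfunctor \<Rightarrow> bool" where
  "discrete_opfibration A B F \<longleftrightarrow> is_functor A B F \<and>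
     (\<forall>x\<in>Obj A. \<forall>b\<in>Arr B. Dom B b = fst F x \<longrightarrow>
        (\<exists>!a. a \<in> Arr A \<and> Dom A a = x \<and> snd F a = b))"

definition cosieve ::
  "('o1, 'm1) cat \<Rightarrow> ('o2, 'm2) cat \<Rightarrow> ('o1, 'm1, 'o2, 'm2) cfunctor \<Rightarrow> bool" where
  "cosieve A B J \<longleftrightarrow> discrete_opfibration A B J \<and> inj_on (fst J) (Obj A)"

definition cocone ::
  "('ao, 'am) cat \<Rightarrow> ('bo, 'bm) cat \<Rightarrow> ('co, 'cm) cat \<Rightarrow> ('eo, 'em) cat \<Rightarrow>
   ('ao, 'am, 'bo, 'bm) cfunctor \<Rightarrow> ('ao, 'am, 'co, 'cm) cfunctor \<Rightarrow>
   ('bo, 'bm, 'eo, 'em) cfunctor \<Rightarrow> ('co, 'cm, 'eo, 'em) cfunctor \<Rightarrow> bool" where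
  "cocone A B C E J F G H \<longleftrightarrow> is_functor B E G \<and> is_functor C E H \<and>
     (\<forall>x\<in>Obj A. fst G (fst J x) = fst H (fst F x)) \<and>
     (\<forall>a\<in>Arr A. snd G (snd J a) = snd H (snd F a))"

text \<open>Universal property of the pushout square, tested against all cocones whose
  vertex is a category with object type 'eo and morphism type 'em (selected by the
  TYPE argument). Mediating functors are unique as functors, i.e. on the carriers.\<close>

definition pushout_wrt ::
  "('ao, 'am) cat \<Rightarrow> ('bo, 'bm) cat \<Rightarrow> ('co, 'cm) cat \<Rightarrow> ('do, 'dm) cat \<Rightarrow>
   ('ao, 'am, 'bo, 'bm) cfunctor \<Rightarrow> ('ao, 'am, 'co, 'cm) cfunctor \<Rightarrow>
   ('bo, 'bm, 'do, 'dm) cfunctor \<Rightarrow> ('co, 'cm, 'do, 'dm) cfunctor \<Rightarrow>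
   ('eo \<times> 'em) itself \<Rightarrow> bool" where
  "pushout_wrt A B C D J F Fb Jb (_ :: ('eo \<times> 'em) itself) \<longleftrightarrow>
     is_functor A B J \<and> is_functor A C F \<and> cocone A B C D J F Fb Jb \<and>
     (\<forall>(E :: ('eo, 'em) cat) G H. cocone A B C E J F G H \<longrightarrow>
        (\<exists>K. is_functor D E K \<and>
             (\<forall>y\<in>Obj B. fst K (fst Fb y) = fst G y) \<and> (\<forall>b\<in>Arr B. snd K (snd Fb b) = snd G b) \<and>
             (\<forall>z\<in>Obj C. fst K (fst Jb z) = fst H z) \<and> (\<forall>c\<in>Arr C. snd K (snd Jb c) = snd H c) \<and>
             (\<forall>K'. is_functor D E K' \<and>
                (\<forall>y\<in>Obj B. fst K' (fst Fb y) = fst G y) \<and> (\<forall>b\<in>Arr B. snd K' (snd Fb b) = snd G b) \<and>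
                (\<forall>z\<in>Obj C. fst K' (fst Jb z) = fst H z) \<and> (\<forall>c\<in>Arr C. snd K' (snd Jb c) = snd H c)
                \<longrightarrow> (\<forall>x\<in>Obj D. fst K' x = fst K x) \<and> (\<forall>h\<in>Arr D. snd K' h = snd K h))))"

text \<open>HOL cannot quantify over all types, so the universal property is
  required for cocones into categories of D's own types and into categories with
  objects of type ('bo + 'co) set and morphisms of type ('bm + 'cm) list set; the
  standard construction of the pushout (classes of objects of B + C, classes of
  composable paths of morphisms of B + C) lives in the latter, so these two
  conditions together characterise D exactly as a pushout (up to isomorphism).\<close>

definition is_pushout ::
  "('ao, 'am) cat \<Rightarrow> ('bo, 'bm) cat \<Rightarrow> ('co, 'cm) cat \<Rightarrow> ('do, 'dm) cat \<Rightarrow>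
   ('ao, 'am, 'bo, 'bm) cfunctor \<Rightarrow> ('ao, 'am, 'co, 'cm) cfunctor \<Rightarrow>
   ('bo, 'bm, 'do, 'dm) cfunctor \<Rightarrow> ('co, 'cm, 'do, 'dm) cfunctor \<Rightarrow> bool" where
  "is_pushout A B C D J F Fb Jb \<longleftrightarrow>
     pushout_wrt A B C D J F Fb Jb TYPE('do \<times> 'dm) \<and>
     pushout_wrt A B C D J F Fb Jb TYPE(('bo + 'co) set \<times> ('bm + 'cm) list set)"

end

theory Submission
  imports Defs
begin

lemma cat_dom: "category C \<Longrightarrow> f \<in> Arr C \<Longrightarrow> Dom C f \<in> Obj C" by (simp add: category_def)
lemma cat_cod: "category C \<Longrightarrow> f \<in> Arr C \<Longrightarrow> Cod C f \<in> Obj C" by (simp add: category_def)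
lemma cat_id: "category C \<Longrightarrow> x \<in> Obj C \<Longrightarrow> Id C x \<in> Arr C" by (simp add: category_def)
lemma cat_id_dom: "category C \<Longrightarrow> x \<in> Obj C \<Longrightarrow> Dom C (Id C x) = x" by (simp add: category_def)
lemma cat_id_cod: "category C \<Longrightarrow> x \<in> Obj C \<Longrightarrow> Cod C (Id C x) = x" by (simp add: category_def)
lemma cat_comp: "category C \<Longrightarrow> f \<in> Arr C \<Longrightarrow> g \<in> Arr C \<Longrightarrow> Cod C f = Dom C g \<Longrightarrow> Comp C g f \<in> Arr C"
  by (simp add: category_def)
lemma cat_comp_dom: "category C \<Longrightarrow> f \<in> Arr C \<Longrightarrow> g \<in> Arr C \<Longrightarrow> Cod C f = Dom C g \<Longrightarrow> Dom C (Comp C g f) = Dom C f"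
  by (simp add: category_def)
lemma cat_comp_cod: "category C \<Longrightarrow> f \<in> Arr C \<Longrightarrow> g \<in> Arr C \<Longrightarrow> Cod C f = Dom C g \<Longrightarrow> Cod C (Comp C g f) = Cod C g"
  by (simp add: category_def)
lemma cat_idr: "category C \<Longrightarrow> f \<in> Arr C \<Longrightarrow> Comp C f (Id C (Dom C f)) = f" by (simp add: category_def)
lemma cat_idl: "category C \<Longrightarrow> f \<in> Arr C \<Longrightarrow> Comp C (Id C (Cod C f)) f = f" by (simp add: category_def)
lemma cat_assoc: "category C \<Longrightarrow> f \<in> Arr C \<Longrightarrow> g \<in> Arr C \<Longrightarrow> h \<in> Arr C \<Longrightarrow> Cod C f = Dom C g \<Longrightarrow> Cod C g = Dom C h \<Longrightarrow>
   Comp C h (Comp C g f) = Comp C (Comp C h g) f" by (simp add: category_def)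

lemma fn_cat1: "is_functor C D F \<Longrightarrow> category C" by (simp add: is_functor_def)
lemma fn_cat2: "is_functor C D F \<Longrightarrow> category D" by (simp add: is_functor_def)
lemma fn_obj: "is_functor C D F \<Longrightarrow> x \<in> Obj C \<Longrightarrow> fst F x \<in> Obj D" by (simp add: is_functor_def)
lemma fn_arr: "is_functor C D F \<Longrightarrow> f \<in> Arr C \<Longrightarrow> snd F f \<in> Arr D" by (simp add: is_functor_def)
lemma fn_dom: "is_functor C D F \<Longrightarrow> f \<in> Arr C \<Longrightarrow> Dom D (snd F f) = fst F (Dom C f)" by (simp add: is_functor_def)
lemma fn_cod: "is_functor C D F \<Longrightarrow> f \<in> Arr C \<Longrightarrow> Cod D (snd F f) = fst F (Cod C f)" by (simp add: is_functor_def)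
lemma fn_id: "is_functor C D F \<Longrightarrow> x \<in> Obj C \<Longrightarrow> snd F (Id C x) = Id D (fst F x)" by (simp add: is_functor_def)
lemma fn_comp: "is_functor C D F \<Longrightarrow> f \<in> Arr C \<Longrightarrow> g \<in> Arr C \<Longrightarrow> Cod C f = Dom C g \<Longrightarrow>
   snd F (Comp C g f) = Comp D (snd F g) (snd F f)" by (simp add: is_functor_def)

definition dec :: "'m list set \<Rightarrow> 'm" where "dec m = hd (the_elem m)"
lemma dec_simp[simp]: "dec {[x]} = x" by (simp add: dec_def)

locale po_setup =
  fixes A :: "('ao, 'am) cat" and B :: "('bo, 'bm) cat" and C :: "('co, 'cm) cat"
    and F :: "('ao, 'am, 'co, 'cm) cfunctor" and J :: "('ao, 'am, 'bo, 'bm) cfunctor"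
  assumes dF: "discrete_opfibration A C F" and cJ: "cosieve A B J"
begin

lemma fF: "is_functor A C F" using dF by (simp add: discrete_opfibration_def)
lemma fJ: "is_functor A B J" using cJ by (simp add: cosieve_def discrete_opfibration_def)
lemma catA: "category A" using fF fn_cat1 by blast
lemma catB: "category B" using fJ fn_cat2 by blast
lemma catC: "category C" using fF fn_cat2 by blast
lemma injJ: "inj_on (fst J) (Obj A)" using cJ by (simp add: cosieve_def)

definition "JA = fst J ` Obj A"
definition "jinv y = inv_into (Obj A) (fst J) y"
definition "liftF c a = (THE x. x \<in> Arr A \<and> Dom A x = a \<and> snd F x = c)"
definition "liftJ b = (THE x. x \<in> Arr A \<and> Dom A x = jinv (Dom B b) \<and> snd J x = b)"

lemma jinv_J[simp]: "a \<in> Obj A \<Longrightarrow> jinv (fst J a) = a"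
  by (simp add: jinv_def injJ)
lemma JA_I[simp]: "a \<in> Obj A \<Longrightarrow> fst J a \<in> JA" by (simp add: JA_def)
lemma jinv_obj: "y \<in> JA \<Longrightarrow> jinv y \<in> Obj A" by (auto simp: JA_def jinv_def inv_into_into)
lemma J_jinv: "y \<in> JA \<Longrightarrow> fst J (jinv y) = y" unfolding JA_def jinv_def by (rule f_inv_into_f)

lemma dF_ex: "x \<in> Obj A \<Longrightarrow> c \<in> Arr C \<Longrightarrow> Dom C c = fst F x \<Longrightarrow> \<exists>!a. a \<in> Arr A \<and> Dom A a = x \<and> snd F a = c"
  using dF unfolding discrete_opfibration_def by blast
lemma dJ_ex: "x \<in> Obj A \<Longrightarrow> c \<in> Arr B \<Longrightarrow> Dom B c = fst J x \<Longrightarrow> \<exists>!a. a \<in> Arr A \<and> Dom A a = x \<and> snd J a = c"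
  using cJ unfolding discrete_opfibration_def cosieve_def by blast

lemma liftF: assumes "a \<in> Obj A" "c \<in> Arr C" "Dom C c = fst F a"
  shows "liftF c a \<in> Arr A" "Dom A (liftF c a) = a" "snd F (liftF c a) = c"
proof -
  have "liftF c a \<in> Arr A \<and> Dom A (liftF c a) = a \<and> snd F (liftF c a) = c" unfolding liftF_def
    by (rule theI'[OF dF_ex[OF assms]])
  then show "liftF c a \<in> Arr A" "Dom A (liftF c a) = a" "snd F (liftF c a) = c" by auto
qed

lemma liftF_uniq: assumes "x \<in> Arr A" shows "liftF (snd F x) (Dom A x) = x"
proof -
  have u: "\<exists>!y. y \<in> Arr A \<and> Dom A y = Dom A x \<and> snd F y = snd F x"
    by (rule dF_ex[OF cat_dom[OF catA assms] fn_arr[OF fF assms] fn_dom[OF fF assms]])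
  show ?thesis unfolding liftF_def using assms by (intro the1_equality[OF u]) auto
qed

lemma liftF_uniq': "x \<in> Arr A \<Longrightarrow> Dom A x = a \<Longrightarrow> snd F x = c \<Longrightarrow> liftF c a = x"
  using liftF_uniq by blast

lemma liftJ: assumes "b \<in> Arr B" "Dom B b \<in> JA"
  shows "liftJ b \<in> Arr A" "Dom A (liftJ b) = jinv (Dom B b)" "snd J (liftJ b) = b"
proof -
  have "Dom B b = fst J (jinv (Dom B b))" using J_jinv[OF assms(2)] by simp
  note u = dJ_ex[OF jinv_obj[OF assms(2)] assms(1) this]
  have "liftJ b \<in> Arr A \<and> Dom A (liftJ b) = jinv (Dom B b) \<and> snd J (liftJ b) = b" unfolding liftJ_def
    by (rule theI'[OF u])
  then show "liftJ b \<in> Arr A" "Dom A (liftJ b) = jinv (Dom B b)" "snd J (liftJ b) = b" by auto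
qed

lemma liftJ_uniq: assumes "x \<in> Arr A" shows "liftJ (snd J x) = x"
proof -
  have d: "Dom B (snd J x) = fst J (Dom A x)" "Dom A x \<in> Obj A"
    using fn_dom[OF fJ assms] cat_dom[OF catA assms] by auto
  have u: "\<exists>!y. y \<in> Arr A \<and> Dom A y = Dom A x \<and> snd J y = snd J x"
    by (rule dJ_ex[OF d(2) fn_arr[OF fJ assms] d(1)])
  have jd: "jinv (Dom B (snd J x)) = Dom A x" using d by simp
  show ?thesis unfolding liftJ_def jd using assms by (intro the1_equality[OF u]) auto
qed

lemma cod_JA: assumes "b \<in> Arr B" "Dom B b \<in> JA" shows "Cod B b = fst J (Cod A (liftJ b))"
proof -
  have "Cod B (snd J (liftJ b)) = fst J (Cod A (liftJ b))" by (rule fn_cod[OF fJ liftJ(1)[OF assms]])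
  then show ?thesis using liftJ(3)[OF assms] by simp
qed

lemma cod_JA': assumes "b \<in> Arr B" "Dom B b \<in> JA" shows "Cod B b \<in> JA"
  using cod_JA[OF assms] JA_I[OF cat_cod[OF catA liftJ(1)[OF assms]]] by simp

lemma liftF_comp: assumes "a \<in> Obj A" "c1 \<in> Arr C" "c2 \<in> Arr C" "Dom C c1 = fst F a" "Cod C c1 = Dom C c2"
  shows "liftF (Comp C c2 c1) a = Comp A (liftF c2 (Cod A (liftF c1 a))) (liftF c1 a)"
proof -
  note l1 = liftF[OF assms(1,2,4)]
  have a1: "Cod A (liftF c1 a) \<in> Obj A" by (rule cat_cod[OF catA l1(1)])
  have "Cod C (snd F (liftF c1 a)) = fst F (Cod A (liftF c1 a))" by (rule fn_cod[OF fF l1(1)])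
  then have e: "Dom C c2 = fst F (Cod A (liftF c1 a))" unfolding l1(3) assms(5) .
  note l2 = liftF[OF a1 assms(3) e]
  have e2: "Cod A (liftF c1 a) = Dom A (liftF c2 (Cod A (liftF c1 a)))" using l2(2) by (rule sym)
  show ?thesis
  proof (rule liftF_uniq')
    show "Comp A (liftF c2 (Cod A (liftF c1 a))) (liftF c1 a) \<in> Arr A" by (rule cat_comp[OF catA l1(1) l2(1) e2])
    have "Dom A (Comp A (liftF c2 (Cod A (liftF c1 a))) (liftF c1 a)) = Dom A (liftF c1 a)"
      by (rule cat_comp_dom[OF catA l1(1) l2(1) e2])
    then show "Dom A (Comp A (liftF c2 (Cod A (liftF c1 a))) (liftF c1 a)) = a" unfolding l1(2) .
    have "snd F (Comp A (liftF c2 (Cod A (liftF c1 a))) (liftF c1 a)) = Comp C (snd F (liftF c2 (Cod A (liftF c1 a)))) (snd F (liftF c1 a))"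
      by (rule fn_comp[OF fF l1(1) l2(1) e2])
    then show "snd F (Comp A (liftF c2 (Cod A (liftF c1 a))) (liftF c1 a)) = Comp C c2 c1" unfolding l1(3) l2(3) .
  qed
qed

lemma liftF_id: assumes "a \<in> Obj A" shows "liftF (Id C (fst F a)) a = Id A a"
proof (rule liftF_uniq')
  show "Id A a \<in> Arr A" by (rule cat_id[OF catA assms])
  show "Dom A (Id A a) = a" by (rule cat_id_dom[OF catA assms])
  show "snd F (Id A a) = Id C (fst F a)" by (rule fn_id[OF fF assms])
qed

end

context po_setup
begin

definition Gob :: "'bo \<Rightarrow> ('bo + 'co) set" where
  "Gob y = (if y \<in> JA then {Inr (fst F (jinv y))} else {Inl y})"

definition Garr :: "'bm \<Rightarrow> ('bm + 'cm) list set" where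
  "Garr b = (if Dom B b \<in> JA then {[Inr (snd F (liftJ b))]} else {[Inl b]})"

definition pcomp :: "'bm + 'cm \<Rightarrow> 'bm + 'cm \<Rightarrow> 'bm + 'cm" where
  "pcomp u v = (case u of
      Inr c \<Rightarrow> (case v of Inr c1 \<Rightarrow> Inr (Comp C c c1) | Inl b \<Rightarrow> Inl (Comp B (snd J (liftF c (jinv (Cod B b)))) b))
    | Inl b2 \<Rightarrow> (case v of Inl b1 \<Rightarrow> Inl (Comp B b2 b1) | Inr c \<Rightarrow> u))"

definition P :: "(('bo + 'co) set, ('bm + 'cm) list set) cat" where
  "P = \<lparr>Obj = (\<lambda>y. {Inl y}) ` (Obj B - JA) \<union> (\<lambda>z. {Inr z}) ` Obj C,
        Arr = (\<lambda>b. {[Inl b]}) ` {b \<in> Arr B. Dom B b \<notin> JA} \<union> (\<lambda>c. {[Inr c]}) ` Arr C,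
        Dom = (\<lambda>m. case dec m of Inl b \<Rightarrow> {Inl (Dom B b)} | Inr c \<Rightarrow> {Inr (Dom C c)}),
        Cod = (\<lambda>m. case dec m of Inl b \<Rightarrow> Gob (Cod B b) | Inr c \<Rightarrow> {Inr (Cod C c)}),
        Id = (\<lambda>x. case the_elem x of Inl y \<Rightarrow> {[Inl (Id B y)]} | Inr z \<Rightarrow> {[Inr (Id C z)]}),
        Comp = (\<lambda>g f. {[pcomp (dec g) (dec f)]})\<rparr>"

lemma P_Dom_l[simp]: "Dom P {[Inl b]} = {Inl (Dom B b)}" by (simp add: P_def)
lemma P_Dom_r[simp]: "Dom P {[Inr c]} = {Inr (Dom C c)}" by (simp add: P_def)
lemma P_Cod_l[simp]: "Cod P {[Inl b]} = Gob (Cod B b)" by (simp add: P_def)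
lemma P_Cod_r[simp]: "Cod P {[Inr c]} = {Inr (Cod C c)}" by (simp add: P_def)
lemma P_Id_l[simp]: "Id P {Inl y} = {[Inl (Id B y)]}" by (simp add: P_def)
lemma P_Id_r[simp]: "Id P {Inr z} = {[Inr (Id C z)]}" by (simp add: P_def)
lemma P_Comp: "Comp P g f = {[pcomp (dec g) (dec f)]}" by (simp add: P_def)
lemma P_Comp_ll[simp]: "Comp P {[Inl b2]} {[Inl b1]} = {[Inl (Comp B b2 b1)]}" by (simp add: P_Comp pcomp_def)
lemma P_Comp_rr[simp]: "Comp P {[Inr c2]} {[Inr c1]} = {[Inr (Comp C c2 c1)]}" by (simp add: P_Comp pcomp_def)
lemma P_Comp_rl[simp]: "Comp P {[Inr c]} {[Inl b]} = {[Inl (Comp B (snd J (liftF c (jinv (Cod B b)))) b)]}"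
  by (simp add: P_Comp pcomp_def)
lemma P_Arr_l[simp]: "{[Inl b]} \<in> Arr P \<longleftrightarrow> b \<in> Arr B \<and> Dom B b \<notin> JA" by (auto simp: P_def)
lemma P_Arr_r[simp]: "{[Inr c]} \<in> Arr P \<longleftrightarrow> c \<in> Arr C" by (auto simp: P_def)
lemma P_Obj_l[simp]: "{Inl y} \<in> Obj P \<longleftrightarrow> y \<in> Obj B \<and> y \<notin> JA" by (auto simp: P_def)
lemma P_Obj_r[simp]: "{Inr z} \<in> Obj P \<longleftrightarrow> z \<in> Obj C" by (auto simp: P_def)

lemma P_Arr_E: assumes "m \<in> Arr P"
  obtains (L) b where "m = {[Inl b]}" "b \<in> Arr B" "Dom B b \<notin> JA"
        | (R) c where "m = {[Inr c]}" "c \<in> Arr C"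
  using assms by (auto simp: P_def)

lemma P_Obj_E: assumes "x \<in> Obj P"
  obtains (L) y where "x = {Inl y}" "y \<in> Obj B" "y \<notin> JA"
        | (R) z where "x = {Inr z}" "z \<in> Obj C"
  using assms by (auto simp: P_def)

lemma Gob_obj: "y \<in> Obj B \<Longrightarrow> Gob y \<in> Obj P"
  using fn_obj[OF fF jinv_obj] by (auto simp: Gob_def)

lemma Gob_Inr: "Gob y = {Inr z} \<longleftrightarrow> y \<in> JA \<and> fst F (jinv y) = z"
  by (auto simp: Gob_def)
lemma Gob_Inl: "Gob y = {Inl y'} \<longleftrightarrow> y \<notin> JA \<and> y = y'"
  by (auto simp: Gob_def)

lemma mixed: assumes b: "b \<in> Arr B" and c: "c \<in> Arr C" and cb: "Cod B b \<in> JA"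
  and dc: "fst F (jinv (Cod B b)) = Dom C c"
  defines "x \<equiv> liftF c (jinv (Cod B b))"
  shows "x \<in> Arr A" "Dom A x = jinv (Cod B b)" "snd F x = c"
    "Comp B (snd J x) b \<in> Arr B" "Dom B (Comp B (snd J x) b) = Dom B b"
    "Cod B (Comp B (snd J x) b) = fst J (Cod A x)" "Cod B b = Dom B (snd J x)" "snd J x \<in> Arr B"
proof -
  note l = liftF[OF jinv_obj[OF cb] c dc[symmetric], folded x_def]
  show "x \<in> Arr A" "Dom A x = jinv (Cod B b)" "snd F x = c" using l by auto
  have dx: "Cod B b = Dom B (snd J x)" using fn_dom[OF fJ l(1)] l(2) J_jinv[OF cb] by simp
  note a1 = fn_arr[OF fJ l(1)]
  show "Cod B b = Dom B (snd J x)" "snd J x \<in> Arr B" by (rule dx, rule a1)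
  show "Comp B (snd J x) b \<in> Arr B" by (rule cat_comp[OF catB b a1 dx])
  show "Dom B (Comp B (snd J x) b) = Dom B b" by (rule cat_comp_dom[OF catB b a1 dx])
  have "Cod B (Comp B (snd J x) b) = Cod B (snd J x)" by (rule cat_comp_cod[OF catB b a1 dx])
  then show "Cod B (Comp B (snd J x) b) = fst J (Cod A x)"
    using fn_cod[OF fJ l(1)] by simp
qed


lemma P_dom_obj: "m \<in> Arr P \<Longrightarrow> Dom P m \<in> Obj P"
  by (erule P_Arr_E) (simp_all add: cat_dom[OF catB] cat_dom[OF catC])

lemma P_cod_obj: "m \<in> Arr P \<Longrightarrow> Cod P m \<in> Obj P"
  by (erule P_Arr_E) (simp_all add: Gob_obj cat_cod[OF catB] cat_cod[OF catC])

lemma P_id0: assumes "x \<in> Obj P" shows "Id P x \<in> Arr P \<and> Dom P (Id P x) = x \<and> Cod P (Id P x) = x"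
  using assms
proof (cases rule: P_Obj_E)
  case (L y)
  then show ?thesis
    by (simp add: cat_id[OF catB] cat_id_dom[OF catB] cat_id_cod[OF catB] Gob_def)
next
  case (R z)
  then show ?thesis
    by (simp add: cat_id[OF catC] cat_id_dom[OF catC] cat_id_cod[OF catC])
qed

lemma P_comp: assumes f: "f \<in> Arr P" and g: "g \<in> Arr P" and fg: "Cod P f = Dom P g"
  shows "Comp P g f \<in> Arr P \<and> Dom P (Comp P g f) = Dom P f \<and> Cod P (Comp P g f) = Cod P g"
  using f
proof (cases rule: P_Arr_E)
  case (L b1)
  note f1 = L
  show ?thesis using g
  proof (cases rule: P_Arr_E)
    case (L b2)
    have "Gob (Cod B b1) = {Inl (Dom B b2)}" using fg f1 L by simp
    then have e: "Cod B b1 = Dom B b2" by (simp add: Gob_Inl)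
    show ?thesis using f1 L cat_comp[OF catB _ _ e] cat_comp_dom[OF catB _ _ e] cat_comp_cod[OF catB _ _ e]
      by simp
  next
    case (R c)
    have "Gob (Cod B b1) = {Inr (Dom C c)}" using fg f1 R by simp
    then have e: "Cod B b1 \<in> JA" "fst F (jinv (Cod B b1)) = Dom C c" by (simp_all add: Gob_Inr)
    note m = mixed[OF f1(2) R(2) e]
    let ?x = "liftF c (jinv (Cod B b1))"
    have gc: "Gob (fst J (Cod A ?x)) = {Inr (Cod C c)}"
    proof -
      have co: "Cod A ?x \<in> Obj A" by (rule cat_cod[OF catA m(1)])
      have "Cod C (snd F ?x) = fst F (Cod A ?x)" by (rule fn_cod[OF fF m(1)])
      then have "fst F (Cod A ?x) = Cod C c" unfolding m(3) by (rule sym)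
      then show ?thesis using co by (simp add: Gob_def)
    qed
    show ?thesis using f1 R m(4,5,6) gc by simp
  qed
next
  case (R c1)
  note f1 = R
  show ?thesis using g
  proof (cases rule: P_Arr_E)
    case (L b2)
    then show ?thesis using fg f1 by simp
  next
    case (R c2)
    have e: "Cod C c1 = Dom C c2" using fg f1 R by simp
    show ?thesis using f1 R cat_comp[OF catC _ _ e] cat_comp_dom[OF catC _ _ e] cat_comp_cod[OF catC _ _ e]
      by simp
  qed
qed

lemma P_idr: assumes "f \<in> Arr P" shows "Comp P f (Id P (Dom P f)) = f"
  using assms by (cases rule: P_Arr_E) (simp_all add: cat_idr[OF catB] cat_idr[OF catC])

lemma P_idl: assumes "f \<in> Arr P" shows "Comp P (Id P (Cod P f)) f = f"
  using assms
proof (cases rule: P_Arr_E)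
  case (L b)
  show ?thesis
  proof (cases "Cod B b \<in> JA")
    case True
    let ?a = "jinv (Cod B b)"
    have a: "?a \<in> Obj A" by (rule jinv_obj[OF True])
    have "snd J (liftF (Id C (fst F ?a)) ?a) = Id B (Cod B b)"
      using liftF_id[OF a] fn_id[OF fJ a] J_jinv[OF True] by simp
    then show ?thesis using L True by (simp add: Gob_def cat_idl[OF catB])
  next
    case False
    then show ?thesis using L by (simp add: Gob_def cat_idl[OF catB])
  qed
next
  case (R c)
  then show ?thesis by (simp add: cat_idl[OF catC])
qed


lemma P_assoc: assumes f: "f \<in> Arr P" and g: "g \<in> Arr P" and h: "h \<in> Arr P"
  and fg: "Cod P f = Dom P g" and gh: "Cod P g = Dom P h"
  shows "Comp P h (Comp P g f) = Comp P (Comp P h g) f"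
  using f
proof (cases rule: P_Arr_E)
  case (L b1)
  note f1 = L
  show ?thesis using g
  proof (cases rule: P_Arr_E)
    case (L b2)
    note g1 = L
    have "Gob (Cod B b1) = {Inl (Dom B b2)}" using fg f1 g1 by simp
    then have e1: "Cod B b1 = Dom B b2" by (simp add: Gob_Inl)
    show ?thesis using h
    proof (cases rule: P_Arr_E)
      case (L b3)
      have "Gob (Cod B b2) = {Inl (Dom B b3)}" using gh g1 L by simp
      then have e2: "Cod B b2 = Dom B b3" by (simp add: Gob_Inl)
      show ?thesis using f1 g1 L cat_assoc[OF catB _ _ _ e1 e2] by simp
    next
      case (R c)
      have "Gob (Cod B b2) = {Inr (Dom C c)}" using gh g1 R by simp
      then have e: "Cod B b2 \<in> JA" "fst F (jinv (Cod B b2)) = Dom C c" by (simp_all add: Gob_Inr)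
      note m = mixed[OF g1(2) R(2) e]
      have cc: "Cod B (Comp B b2 b1) = Cod B b2" by (rule cat_comp_cod[OF catB f1(2) g1(2) e1])
      show ?thesis using f1 g1 R cc cat_assoc[OF catB f1(2) g1(2) m(8) e1 m(7)] by simp
    qed
  next
    case (R c1)
    note g1 = R
    have "Gob (Cod B b1) = {Inr (Dom C c1)}" using fg f1 g1 by simp
    then have e: "Cod B b1 \<in> JA" "fst F (jinv (Cod B b1)) = Dom C c1" by (simp_all add: Gob_Inr)
    note m = mixed[OF f1(2) g1(2) e]
    let ?x1 = "liftF c1 (jinv (Cod B b1))"
    show ?thesis using h
    proof (cases rule: P_Arr_E)
      case (L b3)
      then show ?thesis using gh g1 by simp
    next
      case (R c2)
      have e2: "Cod C c1 = Dom C c2" using gh g1 R by simp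
      let ?x2 = "liftF c2 (Cod A ?x1)"
      have lc: "liftF (Comp C c2 c1) (jinv (Cod B b1)) = Comp A ?x2 ?x1"
        by (rule liftF_comp[OF jinv_obj[OF e(1)] g1(2) R(2) e(2)[symmetric] e2])
      have co: "Cod A ?x1 \<in> Obj A" by (rule cat_cod[OF catA m(1)])
      have "Cod C (snd F ?x1) = fst F (Cod A ?x1)" by (rule fn_cod[OF fF m(1)])
      then have e3: "Dom C c2 = fst F (Cod A ?x1)" unfolding m(3) e2 .
      note l2 = liftF[OF co R(2) e3]
      have e4: "Cod A ?x1 = Dom A ?x2" using l2(2) by (rule sym)
      have jc: "snd J (Comp A ?x2 ?x1) = Comp B (snd J ?x2) (snd J ?x1)" by (rule fn_comp[OF fJ m(1) l2(1) e4])
      have e5: "Cod B (snd J ?x1) = Dom B (snd J ?x2)"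
        using fn_cod[OF fJ m(1)] fn_dom[OF fJ l2(1)] e4 by simp
      have as: "Comp B (Comp B (snd J ?x2) (snd J ?x1)) b1 = Comp B (snd J ?x2) (Comp B (snd J ?x1) b1)"
        by (rule cat_assoc[OF catB f1(2) m(8) fn_arr[OF fJ l2(1)] m(7) e5, symmetric])
      have lhs: "Comp P h (Comp P g f) = {[Inl (Comp B (snd J ?x2) (Comp B (snd J ?x1) b1))]}"
        using f1 g1 R m(6) co by simp
      have rhs: "Comp P (Comp P h g) f = {[Inl (Comp B (Comp B (snd J ?x2) (snd J ?x1)) b1)]}"
        using f1 g1 R lc jc by simp
      show ?thesis using lhs rhs as by simp
    qed
  qed
next
  case (R c1)
  note f1 = R
  show ?thesis using g
  proof (cases rule: P_Arr_E)
    case (L b2)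
    then show ?thesis using fg f1 by simp
  next
    case (R c2)
    note g1 = R
    have e1: "Cod C c1 = Dom C c2" using fg f1 g1 by simp
    show ?thesis using h
    proof (cases rule: P_Arr_E)
      case (L b3)
      then show ?thesis using gh g1 by simp
    next
      case (R c3)
      have e2: "Cod C c2 = Dom C c3" using gh g1 R by simp
      show ?thesis using f1 g1 R cat_assoc[OF catC _ _ _ e1 e2] by simp
    qed
  qed
qed

lemma P_cat: "category P"
  unfolding category_def
proof (intro conjI ballI impI)
  fix f assume "f \<in> Arr P"
  then show "Dom P f \<in> Obj P" "Cod P f \<in> Obj P" "Comp P f (Id P (Dom P f)) = f" "Comp P (Id P (Cod P f)) f = f"
    by (rule P_dom_obj, rule P_cod_obj, rule P_idr, rule P_idl)
next
  fix x assume "x \<in> Obj P"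
  then show "Id P x \<in> Arr P" "Dom P (Id P x) = x" "Cod P (Id P x) = x" using P_id0 by blast+
next
  fix f g assume "f \<in> Arr P" "g \<in> Arr P" "Cod P f = Dom P g"
  then show "Comp P g f \<in> Arr P" "Dom P (Comp P g f) = Dom P f" "Cod P (Comp P g f) = Cod P g"
    using P_comp by blast+
next
  fix f g h assume "f \<in> Arr P" "g \<in> Arr P" "h \<in> Arr P" "Cod P f = Dom P g" "Cod P g = Dom P h"
  then show "Comp P h (Comp P g f) = Comp P (Comp P h g) f" by (rule P_assoc)
qed


lemma G_arr: assumes b: "b \<in> Arr B"
  shows "Garr b \<in> Arr P \<and> Dom P (Garr b) = Gob (Dom B b) \<and> Cod P (Garr b) = Gob (Cod B b)"
proof (cases "Dom B b \<in> JA")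
  case True
  note l = liftJ[OF b True]
  let ?x = "liftJ b"
  have g: "Garr b = {[Inr (snd F ?x)]}" using True by (simp add: Garr_def)
  have d1: "Dom C (snd F ?x) = fst F (jinv (Dom B b))" using fn_dom[OF fF l(1)] l(2) by simp
  have c0: "Cod A ?x \<in> Obj A" by (rule cat_cod[OF catA l(1)])
  have c1: "Cod C (snd F ?x) = fst F (Cod A ?x)" by (rule fn_cod[OF fF l(1)])
  have c2: "Cod B b = fst J (Cod A ?x)" by (rule cod_JA[OF b True])
  show ?thesis using g d1 c0 c1 c2 True fn_arr[OF fF l(1)] by (simp add: Gob_def)
next
  case False
  then show ?thesis using b by (simp add: Garr_def Gob_def)
qed

lemma G_id: assumes y: "y \<in> Obj B" shows "Garr (Id B y) = Id P (Gob y)"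
proof (cases "y \<in> JA")
  case True
  let ?a = "jinv y"
  have a: "?a \<in> Obj A" by (rule jinv_obj[OF True])
  have e: "snd J (Id A ?a) = Id B y" using fn_id[OF fJ a] J_jinv[OF True] by simp
  have lj: "liftJ (Id B y) = Id A ?a" using liftJ_uniq[OF cat_id[OF catA a]] e by simp
  have "Dom B (Id B y) = y" by (rule cat_id_dom[OF catB y])
  then show ?thesis using True lj fn_id[OF fF a] by (simp add: Garr_def Gob_def)
next
  case False
  then show ?thesis using y by (simp add: Garr_def Gob_def cat_id_dom[OF catB y])
qed

lemma G_comp: assumes f: "f \<in> Arr B" and g: "g \<in> Arr B" and fg: "Cod B f = Dom B g"
  shows "Garr (Comp B g f) = Comp P (Garr g) (Garr f)"
proof -
  have dc: "Dom B (Comp B g f) = Dom B f" by (rule cat_comp_dom[OF catB f g fg])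
  show ?thesis
  proof (cases "Dom B f \<in> JA")
    case True
    note l1 = liftJ[OF f True]
    let ?x1 = "liftJ f"
    have c2: "Cod B f = fst J (Cod A ?x1)" by (rule cod_JA[OF f True])
    have co: "Cod A ?x1 \<in> Obj A" by (rule cat_cod[OF catA l1(1)])
    have gJ: "Dom B g \<in> JA" using c2 fg co by (metis JA_I)
    note l2 = liftJ[OF g gJ]
    let ?x2 = "liftJ g"
    have e: "Cod A ?x1 = Dom A ?x2" using l2(2) c2 fg co by simp
    have jc: "snd J (Comp A ?x2 ?x1) = Comp B g f" using fn_comp[OF fJ l1(1) l2(1) e] l1(3) l2(3) by simp
    have lj: "liftJ (Comp B g f) = Comp A ?x2 ?x1" using liftJ_uniq[OF cat_comp[OF catA l1(1) l2(1) e]] jc by simp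
    have fc: "snd F (Comp A ?x2 ?x1) = Comp C (snd F ?x2) (snd F ?x1)" by (rule fn_comp[OF fF l1(1) l2(1) e])
    show ?thesis using True gJ dc lj fc by (simp add: Garr_def)
  next
    case False
    show ?thesis
    proof (cases "Cod B f \<in> JA")
      case True
      have gJ: "Dom B g \<in> JA" using True fg by simp
      note l2 = liftJ[OF g gJ]
      have lf: "liftF (snd F (liftJ g)) (jinv (Cod B f)) = liftJ g" using liftF_uniq[OF l2(1)] l2(2) fg by simp
      show ?thesis using False gJ dc lf l2(3) by (simp add: Garr_def)
    next
      case False2: False
      have gJ: "Dom B g \<notin> JA" using False2 fg by simp
      show ?thesis using False gJ dc by (simp add: Garr_def)
    qed
  qed
qed

lemma G_functor: "is_functor B P (Gob, Garr)"
  unfolding is_functor_def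
proof (intro conjI ballI impI)
  show "category B" by (rule catB)
  show "category P" by (rule P_cat)
next
  fix y assume y: "y \<in> Obj B"
  show "fst (Gob, Garr) y \<in> Obj P" using Gob_obj[OF y] by simp
  show "snd (Gob, Garr) (Id B y) = Id P (fst (Gob, Garr) y)" using G_id[OF y] by simp
next
  fix b assume b: "b \<in> Arr B"
  show "snd (Gob, Garr) b \<in> Arr P" "Dom P (snd (Gob, Garr) b) = fst (Gob, Garr) (Dom B b)"
    "Cod P (snd (Gob, Garr) b) = fst (Gob, Garr) (Cod B b)" using G_arr[OF b] by simp_all
next
  fix f g assume "f \<in> Arr B" "g \<in> Arr B" "Cod B f = Dom B g"
  then show "snd (Gob, Garr) (Comp B g f) = Comp P (snd (Gob, Garr) g) (snd (Gob, Garr) f)"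
    using G_comp by simp
qed

definition Hf :: "('co \<Rightarrow> ('bo + 'co) set) \<times> ('cm \<Rightarrow> ('bm + 'cm) list set)" where
  "Hf = (\<lambda>z. {Inr z}, \<lambda>c. {[Inr c]})"

lemma H_functor: "is_functor C P Hf"
  unfolding is_functor_def Hf_def
  by (simp add: catC P_cat cat_dom[OF catC] cat_cod[OF catC] cat_id[OF catC])

lemma P_cocone: "cocone A B C P J F (Gob, Garr) Hf"
  unfolding cocone_def
proof (intro conjI ballI)
  show "is_functor B P (Gob, Garr)" by (rule G_functor)
  show "is_functor C P Hf" by (rule H_functor)
next
  fix x assume x: "x \<in> Obj A"
  show "fst (Gob, Garr) (fst J x) = fst Hf (fst F x)" using x by (simp add: Gob_def Hf_def)
next
  fix a assume a: "a \<in> Arr A"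
  have "Dom B (snd J a) = fst J (Dom A a)" by (rule fn_dom[OF fJ a])
  then have "Dom B (snd J a) \<in> JA" using cat_dom[OF catA a] by simp
  then show "snd (Gob, Garr) (snd J a) = snd Hf (snd F a)" using liftJ_uniq[OF a] by (simp add: Garr_def Hf_def)
qed

lemma Garr_inj: assumes b: "b \<in> Arr B" and b': "b' \<in> Arr B" and d: "Dom B b = Dom B b'"
  and e: "Garr b = Garr b'" shows "b = b'"
proof (cases "Dom B b \<in> JA")
  case True
  have True': "Dom B b' \<in> JA" using True d by simp
  note l = liftJ[OF b True] and l' = liftJ[OF b' True']
  have fe: "snd F (liftJ b) = snd F (liftJ b')" using e True True' by (simp add: Garr_def)
  have "liftJ b = liftJ b'"
    using liftF_uniq[OF l(1)] liftF_uniq[OF l'(1)] fe l(2) l'(2) d by metis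
  then show ?thesis using l(3) l'(3) by metis
next
  case False
  then show ?thesis using e d by (simp add: Garr_def)
qed

end

theorem theorem5p2:
  fixes A :: "('ao, 'am) cat" and B :: "('bo, 'bm) cat"
    and C :: "('co, 'cm) cat" and D :: "('do, 'dm) cat"
    and F :: "('ao, 'am, 'co, 'cm) cfunctor" and J :: "('ao, 'am, 'bo, 'bm) cfunctor"
    and Fb :: "('bo, 'bm, 'do, 'dm) cfunctor" and Jb :: "('co, 'cm, 'do, 'dm) cfunctor"
  assumes "discrete_opfibration A C F"
    and "cosieve A B J"
    and "is_pushout A B C D J F Fb Jb"
  shows "discrete_opfibration B D Fb"
proof -
  interpret po_setup A B C F J using assms(1,2) by unfold_locales
  have PW1: "pushout_wrt A B C D J F Fb Jb TYPE('do \<times> 'dm)"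
    and PW2: "pushout_wrt A B C D J F Fb Jb TYPE(('bo + 'co) set \<times> ('bm + 'cm) list set)"
    using assms(3) unfolding is_pushout_def by blast+
  have coD: "cocone A B C D J F Fb Jb" using PW1 unfolding pushout_wrt_def by blast
  have fFb: "is_functor B D Fb" and fJb: "is_functor C D Jb" using coD unfolding cocone_def by blast+
  have comm_ob: "\<And>x. x \<in> Obj A \<Longrightarrow> fst Fb (fst J x) = fst Jb (fst F x)"
    and comm_arr: "\<And>a. a \<in> Arr A \<Longrightarrow> snd Fb (snd J a) = snd Jb (snd F a)"
    using coD unfolding cocone_def by blast+
  have catD: "category D" by (rule fn_cat2[OF fFb])
  have ex2: "\<exists>K. is_functor D P K \<and>
             (\<forall>y\<in>Obj B. fst K (fst Fb y) = fst (Gob, Garr) y) \<and> (\<forall>b\<in>Arr B. snd K (snd Fb b) = snd (Gob, Garr) b) \<and>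
             (\<forall>z\<in>Obj C. fst K (fst Jb z) = fst Hf z) \<and> (\<forall>c\<in>Arr C. snd K (snd Jb c) = snd Hf c) \<and>
             (\<forall>K'. is_functor D P K' \<and>
                (\<forall>y\<in>Obj B. fst K' (fst Fb y) = fst (Gob, Garr) y) \<and> (\<forall>b\<in>Arr B. snd K' (snd Fb b) = snd (Gob, Garr) b) \<and>
                (\<forall>z\<in>Obj C. fst K' (fst Jb z) = fst Hf z) \<and> (\<forall>c\<in>Arr C. snd K' (snd Jb c) = snd Hf c)
                \<longrightarrow> (\<forall>x\<in>Obj D. fst K' x = fst K x) \<and> (\<forall>h\<in>Arr D. snd K' h = snd K h))"
    using PW2[unfolded pushout_wrt_def, THEN conjunct2, THEN conjunct2, THEN conjunct2, rule_format, OF P_cocone] .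
  then obtain K where K2: "\<forall>y\<in>Obj B. fst K (fst Fb y) = fst (Gob, Garr) y"
      and K3: "\<forall>b\<in>Arr B. snd K (snd Fb b) = snd (Gob, Garr) b"
      and K4: "\<forall>z\<in>Obj C. fst K (fst Jb z) = fst Hf z"
    by blast
  have obi: "Gob y = Gob y'" if "y \<in> Obj B" "y' \<in> Obj B" "fst Fb y = fst Fb y'" for y y'
    using K2 that by (metis fst_conv)
  have obii: "Gob y = {Inr z}" if "y \<in> Obj B" "z \<in> Obj C" "fst Fb y = fst Jb z" for y z
    using K2 K4 that by (metis fst_conv Hf_def)
  have uniq: "b = b'" if "b \<in> Arr B" "b' \<in> Arr B" "Dom B b = Dom B b'" "snd Fb b = snd Fb b'" for b b'
  proof -
    have "Garr b = Garr b'" using K3 that by (metis snd_conv)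
    then show ?thesis using Garr_inj that by blast
  qed
  define S where "S = {d \<in> Arr D. \<forall>y\<in>Obj B. fst Fb y = Dom D d \<longrightarrow> (\<exists>b\<in>Arr B. Dom B b = y \<and> snd Fb b = d)}"
  define E where "E = D\<lparr>Arr := S\<rparr>"
  have E_simps[simp]: "Obj E = Obj D" "Arr E = S" "Dom E = Dom D" "Cod E = Cod D" "Id E = Id D" "Comp E = Comp D"
    by (simp_all add: E_def)
  have S_sub: "\<And>d. d \<in> S \<Longrightarrow> d \<in> Arr D" by (simp add: S_def)
  have S_lift: "\<And>d y. d \<in> S \<Longrightarrow> y \<in> Obj B \<Longrightarrow> fst Fb y = Dom D d \<Longrightarrow> \<exists>b\<in>Arr B. Dom B b = y \<and> snd Fb b = d"
    by (simp add: S_def)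
  have S_I: "d \<in> S" if "d \<in> Arr D" "\<And>y. y \<in> Obj B \<Longrightarrow> fst Fb y = Dom D d \<Longrightarrow> \<exists>b\<in>Arr B. Dom B b = y \<and> snd Fb b = d" for d
    using that by (simp add: S_def)
  have S_id: "Id D x \<in> S" if x: "x \<in> Obj D" for x
  proof (rule S_I)
    show "Id D x \<in> Arr D" by (rule cat_id[OF catD x])
  next
    fix y assume y: "y \<in> Obj B" and e: "fst Fb y = Dom D (Id D x)"
    have "fst Fb y = x" using e cat_id_dom[OF catD x] by simp
    then have "snd Fb (Id B y) = Id D x" using fn_id[OF fFb y] by simp
    then show "\<exists>b\<in>Arr B. Dom B b = y \<and> snd Fb b = Id D x" using cat_id[OF catB y] cat_id_dom[OF catB y] by blast
  qed
  have S_comp: "Comp D g f \<in> S" if f: "f \<in> S" and g: "g \<in> S" and fg: "Cod D f = Dom D g" for f g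
  proof (rule S_I)
    show "Comp D g f \<in> Arr D" by (rule cat_comp[OF catD S_sub[OF f] S_sub[OF g] fg])
  next
    fix y assume y: "y \<in> Obj B" and e: "fst Fb y = Dom D (Comp D g f)"
    have "fst Fb y = Dom D f" using e cat_comp_dom[OF catD S_sub[OF f] S_sub[OF g] fg] by simp
    then obtain b1 where b1: "b1 \<in> Arr B" "Dom B b1 = y" "snd Fb b1 = f" using S_lift[OF f y] by blast
    have cy: "Cod B b1 \<in> Obj B" by (rule cat_cod[OF catB b1(1)])
    have "fst Fb (Cod B b1) = Dom D g" using fn_cod[OF fFb b1(1)] b1(3) fg by simp
    then obtain b2 where b2: "b2 \<in> Arr B" "Dom B b2 = Cod B b1" "snd Fb b2 = g" using S_lift[OF g cy] by blast
    have e2: "Cod B b1 = Dom B b2" using b2(2) by simp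
    have "Comp B b2 b1 \<in> Arr B" "Dom B (Comp B b2 b1) = y" "snd Fb (Comp B b2 b1) = Comp D g f"
      using cat_comp[OF catB b1(1) b2(1) e2] cat_comp_dom[OF catB b1(1) b2(1) e2] b1(2)
        fn_comp[OF fFb b1(1) b2(1) e2] b1(3) b2(3) by simp_all
    then show "\<exists>b\<in>Arr B. Dom B b = y \<and> snd Fb b = Comp D g f" by blast
  qed
  have catE: "category E"
    unfolding category_def E_simps
  proof (intro conjI ballI impI)
    fix f assume f: "f \<in> S"
    show "Dom D f \<in> Obj D" "Cod D f \<in> Obj D" "Comp D f (Id D (Dom D f)) = f" "Comp D (Id D (Cod D f)) f = f"
      using cat_dom[OF catD S_sub[OF f]] cat_cod[OF catD S_sub[OF f]] cat_idr[OF catD S_sub[OF f]]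
        cat_idl[OF catD S_sub[OF f]] by simp_all
  next
    fix x assume x: "x \<in> Obj D"
    show "Id D x \<in> S" by (rule S_id[OF x])
    show "Dom D (Id D x) = x" "Cod D (Id D x) = x" by (rule cat_id_dom[OF catD x], rule cat_id_cod[OF catD x])
  next
    fix f g assume f: "f \<in> S" and g: "g \<in> S" and fg: "Cod D f = Dom D g"
    show "Comp D g f \<in> S" by (rule S_comp[OF f g fg])
    show "Dom D (Comp D g f) = Dom D f" "Cod D (Comp D g f) = Cod D g"
      by (rule cat_comp_dom[OF catD S_sub[OF f] S_sub[OF g] fg], rule cat_comp_cod[OF catD S_sub[OF f] S_sub[OF g] fg])
  next
    fix f g h assume f: "f \<in> S" and g: "g \<in> S" and h: "h \<in> S" and fg: "Cod D f = Dom D g" and gh: "Cod D g = Dom D h"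
    show "Comp D h (Comp D g f) = Comp D (Comp D h g) f" by (rule cat_assoc[OF catD S_sub[OF f] S_sub[OF g] S_sub[OF h] fg gh])
  qed
  have Fb_S: "snd Fb b \<in> S" if b: "b \<in> Arr B" for b
  proof (rule S_I)
    show "snd Fb b \<in> Arr D" by (rule fn_arr[OF fFb b])
  next
    fix y assume y: "y \<in> Obj B" and e: "fst Fb y = Dom D (snd Fb b)"
    have y0: "Dom B b \<in> Obj B" by (rule cat_dom[OF catB b])
    have "fst Fb y = fst Fb (Dom B b)" using e fn_dom[OF fFb b] by simp
    then have gg: "Gob y = Gob (Dom B b)" by (rule obi[OF y y0])
    show "\<exists>b'\<in>Arr B. Dom B b' = y \<and> snd Fb b' = snd Fb b"
    proof (cases "Dom B b \<in> JA")
      case False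
      then have "y = Dom B b" using gg by (auto simp: Gob_def split: if_splits)
      then show ?thesis using b by blast
    next
      case True
      have yJ: "y \<in> JA" and fe: "fst F (jinv y) = fst F (jinv (Dom B b))" using gg True by (auto simp: Gob_def split: if_splits)
      note l0 = liftJ[OF b True]
      let ?x0 = "liftJ b"
      have a: "jinv y \<in> Obj A" by (rule jinv_obj[OF yJ])
      have d0: "Dom C (snd F ?x0) = fst F (jinv y)" using fn_dom[OF fF l0(1)] l0(2) fe by simp
      note l = liftF[OF a fn_arr[OF fF l0(1)] d0]
      let ?x = "liftF (snd F ?x0) (jinv y)"
      have "snd J ?x \<in> Arr B" by (rule fn_arr[OF fJ l(1)])
      moreover have "Dom B (snd J ?x) = y" using fn_dom[OF fJ l(1)] l(2) J_jinv[OF yJ] by simp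
      moreover have "snd Fb (snd J ?x) = snd Fb b"
        using comm_arr[OF l(1)] comm_arr[OF l0(1)] l(3) l0(3) by simp
      ultimately show ?thesis by blast
    qed
  qed
  have Jb_S: "snd Jb c \<in> S" if c: "c \<in> Arr C" for c
  proof (rule S_I)
    show "snd Jb c \<in> Arr D" by (rule fn_arr[OF fJb c])
  next
    fix y assume y: "y \<in> Obj B" and e: "fst Fb y = Dom D (snd Jb c)"
    have "fst Fb y = fst Jb (Dom C c)" using e fn_dom[OF fJb c] by simp
    then have "Gob y = {Inr (Dom C c)}" by (rule obii[OF y cat_dom[OF catC c]])
    then have yJ: "y \<in> JA" and fe: "fst F (jinv y) = Dom C c" by (simp_all add: Gob_Inr)
    have a: "jinv y \<in> Obj A" by (rule jinv_obj[OF yJ])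
    note l = liftF[OF a c fe[symmetric]]
    let ?x = "liftF c (jinv y)"
    have "snd J ?x \<in> Arr B" by (rule fn_arr[OF fJ l(1)])
    moreover have "Dom B (snd J ?x) = y" using fn_dom[OF fJ l(1)] l(2) J_jinv[OF yJ] by simp
    moreover have "snd Fb (snd J ?x) = snd Jb c" using comm_arr[OF l(1)] l(3) by simp
    ultimately show "\<exists>b\<in>Arr B. Dom B b = y \<and> snd Fb b = snd Jb c" by blast
  qed
  have fFbE: "is_functor B E Fb"
    using fFb catE Fb_S unfolding is_functor_def E_simps by blast
  have fJbE: "is_functor C E Jb"
    using fJb catE Jb_S unfolding is_functor_def E_simps by blast
  have coE: "cocone A B C E J F Fb Jb"
    using coD fFbE fJbE unfolding cocone_def by blast
  have "\<exists>K. is_functor D E K \<and>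
             (\<forall>y\<in>Obj B. fst K (fst Fb y) = fst Fb y) \<and> (\<forall>b\<in>Arr B. snd K (snd Fb b) = snd Fb b) \<and>
             (\<forall>z\<in>Obj C. fst K (fst Jb z) = fst Jb z) \<and> (\<forall>c\<in>Arr C. snd K (snd Jb c) = snd Jb c) \<and>
             (\<forall>K'. is_functor D E K' \<and>
                (\<forall>y\<in>Obj B. fst K' (fst Fb y) = fst Fb y) \<and> (\<forall>b\<in>Arr B. snd K' (snd Fb b) = snd Fb b) \<and>
                (\<forall>z\<in>Obj C. fst K' (fst Jb z) = fst Jb z) \<and> (\<forall>c\<in>Arr C. snd K' (snd Jb c) = snd Jb c)
                \<longrightarrow> (\<forall>x\<in>Obj D. fst K' x = fst K x) \<and> (\<forall>h\<in>Arr D. snd K' h = snd K h))"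
    using PW1[unfolded pushout_wrt_def, THEN conjunct2, THEN conjunct2, THEN conjunct2, rule_format, OF coE] .
  then obtain K1 where K1f: "is_functor D E K1"
      and K1a: "\<forall>y\<in>Obj B. fst K1 (fst Fb y) = fst Fb y" and K1b: "\<forall>b\<in>Arr B. snd K1 (snd Fb b) = snd Fb b"
      and K1c: "\<forall>z\<in>Obj C. fst K1 (fst Jb z) = fst Jb z" and K1d: "\<forall>c\<in>Arr C. snd K1 (snd Jb c) = snd Jb c"
    by blast
  have "\<exists>K. is_functor D D K \<and>
             (\<forall>y\<in>Obj B. fst K (fst Fb y) = fst Fb y) \<and> (\<forall>b\<in>Arr B. snd K (snd Fb b) = snd Fb b) \<and>
             (\<forall>z\<in>Obj C. fst K (fst Jb z) = fst Jb z) \<and> (\<forall>c\<in>Arr C. snd K (snd Jb c) = snd Jb c) \<and>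
             (\<forall>K'. is_functor D D K' \<and>
                (\<forall>y\<in>Obj B. fst K' (fst Fb y) = fst Fb y) \<and> (\<forall>b\<in>Arr B. snd K' (snd Fb b) = snd Fb b) \<and>
                (\<forall>z\<in>Obj C. fst K' (fst Jb z) = fst Jb z) \<and> (\<forall>c\<in>Arr C. snd K' (snd Jb c) = snd Jb c)
                \<longrightarrow> (\<forall>x\<in>Obj D. fst K' x = fst K x) \<and> (\<forall>h\<in>Arr D. snd K' h = snd K h))"
    using PW1[unfolded pushout_wrt_def, THEN conjunct2, THEN conjunct2, THEN conjunct2, rule_format, OF coD] .
  then obtain K0 where K0u: "\<forall>K'. is_functor D D K' \<and>
                (\<forall>y\<in>Obj B. fst K' (fst Fb y) = fst Fb y) \<and> (\<forall>b\<in>Arr B. snd K' (snd Fb b) = snd Fb b) \<and>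
                (\<forall>z\<in>Obj C. fst K' (fst Jb z) = fst Jb z) \<and> (\<forall>c\<in>Arr C. snd K' (snd Jb c) = snd Jb c)
                \<longrightarrow> (\<forall>x\<in>Obj D. fst K' x = fst K0 x) \<and> (\<forall>h\<in>Arr D. snd K' h = snd K0 h)"
    by blast
  have K1D: "is_functor D D K1"
    using K1f S_sub catD unfolding is_functor_def E_simps by blast
  define I0 where "I0 = (id :: 'do \<Rightarrow> 'do, id :: 'dm \<Rightarrow> 'dm)"
  have idD: "is_functor D D I0"
    using catD unfolding is_functor_def I0_def by (simp add: cat_dom[OF catD] cat_cod[OF catD] cat_id[OF catD])
  have allS: "h \<in> S" if h: "h \<in> Arr D" for h
  proof -
    have "snd K1 h = snd K0 h" using K0u K1D K1a K1b K1c K1d h by blast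
    moreover have "snd I0 h = snd K0 h"
    proof -
      note X = spec[OF K0u, of I0]
      have i: "is_functor D D I0 \<and>
                (\<forall>y\<in>Obj B. fst I0 (fst Fb y) = fst Fb y) \<and> (\<forall>b\<in>Arr B. snd I0 (snd Fb b) = snd Fb b) \<and>
                (\<forall>z\<in>Obj C. fst I0 (fst Jb z) = fst Jb z) \<and> (\<forall>c\<in>Arr C. snd I0 (snd Jb c) = snd Jb c)"
          using idD by (simp add: I0_def)
      have "(\<forall>x\<in>Obj D. fst I0 x = fst K0 x) \<and> (\<forall>h\<in>Arr D. snd I0 h = snd K0 h)"
        by (rule mp[OF X i])
      then show ?thesis using h by blast
    qed
    moreover have "snd K1 h \<in> S" using fn_arr[OF K1f h] by simp
    ultimately show ?thesis by (simp add: I0_def)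
  qed
  show ?thesis
    unfolding discrete_opfibration_def
  proof (intro conjI ballI impI)
    show "is_functor B D Fb" by (rule fFb)
  next
    fix y d assume y: "y \<in> Obj B" and d: "d \<in> Arr D" and e: "Dom D d = fst Fb y"
    obtain b where b: "b \<in> Arr B" "Dom B b = y" "snd Fb b = d" using S_lift[OF allS[OF d] y e[symmetric]] by blast
    show "\<exists>!b. b \<in> Arr B \<and> Dom B b = y \<and> snd Fb b = d"
    proof (rule ex1I[of _ b])
      show "b \<in> Arr B \<and> Dom B b = y \<and> snd Fb b = d" using b by blast
    next
      fix b' assume "b' \<in> Arr B \<and> Dom B b' = y \<and> snd Fb b' = d"
      then show "b' = b" using uniq[of b' b] b by simp
    qed
  qed
qed

end
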